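(* Consider the waning-immunity model described in the context. There exists a constant $C>0$ such that for all sufficiently small $\delta\ge0$, the set of values $I^*$ of endemic equilibria with $I^*\in[0,1]$ is contained in $J_1\cup J_2$, where $J_i=[y_i-C\sqrt\delta,\,y_i+C\sqrt\delta]$ and $y_1\le y_2$ are the (real) roots of $$1+\frac{r}{\beta_0x+\mu}-\frac{\beta_n}{\beta_nx+\mu+\omega_n}-\frac{\omega_n\beta_0}{(\beta_0x+\mu)(\beta_nx+\mu+\omega_n)}=0.$$ In particular, if this equation has no real roots, or no roots in $[0,1]$, then for $\delta$ small enough there are no endemic equilibria with $I^*\in[0,1]$. The latter is the case when $(\omega_n+\mu)(\mu+r)>\beta_0\omega_n+\beta_n\mu$. If $(\omega_n+\mu)(\mu+r)<\beta_0\omega_n+\beta_n\mu$, then the equation has exactly one root $y$ in $[0,1]$; and if $(\omega_n+\mu)(\mu+r)=\beta_0\omega_n+\beta_n\mu$, then $x=0$ is a root.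
   Context: Model: Fix an integer $n\ge 1$ and parameters $\delta\ge 0$ (rate of waning immunity), $\omega\ge 0$ (vaccination rate), $r>0$ (recovery rate), $\mu>0$ (birth = death rate), coverages $p_0=0$, $p_1,\dots,p_n\in[0,1]$, and transmission rates $0\le\beta_0\le\beta_1\le\dots\le\beta_n$ with $\beta_0<\beta_n$. Write $\omega_i=p_i\omega$, $\delta_i=(1-p_i)\delta$ (so $\delta_0=\delta$). The ODE system for $(S_0,\dots,S_n,I)$ is $$S_0'=\sum_{i=1}^n\omega_iS_i-\delta S_0+rI-\beta_0IS_0-\mu S_0,$$ $$S_i'=-\omega_iS_i+\delta_{i-1}S_{i-1}-\delta_iS_i-\beta_iIS_i-\mu S_i\quad(1\le i\le n-1),$$ $$S_n'=\mu-\omega_nS_n+\delta_{n-1}S_{n-1}-\beta_nIS_n-\mu S_n,$$ $$I'=I\sum_{i=0}^n\beta_iS_i-rI-\mu I,$$ with the normalization $\sum_iS_i+I=1$. An endemic equilibrium is an equilibrium $(S_0^*,\dots,S_n^*,I^* )$ of this system satisfying the normalization with $I^*\neq0$. *)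

theory Defs
  imports Complex_Main
begin

text \<open>Parameters: d = delta (waning rate), w = omega (vaccination rate), r (recovery),
  mu (birth = death rate), coverages p i, transmission rates beta i.
  omega_i = p i * w, delta_i = (1 - p i) * d.\<close>

definition endemic_eq ::
  "nat \<Rightarrow> real \<Rightarrow> real \<Rightarrow> real \<Rightarrow> real \<Rightarrow> (nat \<Rightarrow> real) \<Rightarrow> (nat \<Rightarrow> real)
   \<Rightarrow> (nat \<Rightarrow> real) \<Rightarrow> real \<Rightarrow> bool" where
  "endemic_eq n d w r mu p beta S I \<longleftrightarrow>
     (let om = (\<lambda>i. p i * w); de = (\<lambda>i. (1 - p i) * d) in
       (\<Sum>i=1..n. om i * S i) - d * S 0 + r * I - beta 0 * I * S 0 - mu * S 0 = 0 \<and>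
       (\<forall>i\<in>{1..n-1}. - om i * S i + de (i-1) * S (i-1) - de i * S i
                        - beta i * I * S i - mu * S i = 0) \<and>
       mu - om n * S n + de (n-1) * S (n-1) - beta n * I * S n - mu * S n = 0 \<and>
       I * (\<Sum>i=0..n. beta i * S i) - r * I - mu * I = 0 \<and>
       (\<Sum>i=0..n. S i) + I = 1 \<and>
       I \<noteq> 0)"

definition wi_F :: "real \<Rightarrow> real \<Rightarrow> real \<Rightarrow> real \<Rightarrow> real \<Rightarrow> real \<Rightarrow> real" where
  "wi_F r mu b0 bn wn x =
     1 + r / (b0 * x + mu) - bn / (bn * x + mu + wn)
       - wn * b0 / ((b0 * x + mu) * (bn * x + mu + wn))"

definition wi_root :: "real \<Rightarrow> real \<Rightarrow> real \<Rightarrow> real \<Rightarrow> real \<Rightarrow> real \<Rightarrow> bool" where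
  "wi_root r mu b0 bn wn x \<longleftrightarrow>
     b0 * x + mu \<noteq> 0 \<and> bn * x + mu + wn \<noteq> 0 \<and> wi_F r mu b0 bn wn x = 0"

end

theory Submission
  imports Defs
begin

lemma quad_near_root:
  fixes a b c K h :: real
  assumes ha: "a \<ge> 0" and hab: "a > 0 \<or> b \<noteq> 0" and hK: "K \<ge> 0" and hh: "h > 0"
  shows "\<exists>C>0. \<exists>d0>0. \<forall>d x. 0 \<le> d \<and> d \<le> d0 \<and> \<bar>a*x^2+b*x+c\<bar> \<le> K*d \<longrightarrow>
           (\<exists>y. a*y^2+b*y+c = 0 \<and> \<bar>x-y\<bar> \<le> C*sqrt d \<and> \<bar>x-y\<bar> \<le> h)"
proof (cases "a = 0")
  case True
  then have hb: "b \<noteq> 0" using hab by auto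
  define C where "C = K/\<bar>b\<bar> + 1"
  have C0: "C > 0" unfolding C_def using hK by (simp add: add_nonneg_pos)
  define d0 where "d0 = min 1 ((h/C)^2)"
  have d00: "d0 > 0" unfolding d0_def using C0 hh by simp
  show ?thesis
  proof (rule exI[of _ C], rule conjI[OF C0], rule exI[of _ d0], rule conjI[OF d00], intro allI impI)
    fix d x assume H: "0 \<le> d \<and> d \<le> d0 \<and> \<bar>a*x^2+b*x+c\<bar> \<le> K*d"
    have d1: "d \<le> 1" and d2: "d \<le> (h/C)^2" using H unfolding d0_def by auto
    have s1: "sqrt d \<le> 1" using d1 by simp
    have "sqrt d * sqrt d \<le> sqrt d * 1" by (rule mult_left_mono) (use s1 H in auto)
    then have sd: "d \<le> sqrt d" using H by simp
    let ?y = "-c/b"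
    have e: "x - ?y = (b*x+c)/b" using hb by (simp add: field_simps)
    have "\<bar>x - ?y\<bar> = \<bar>b*x+c\<bar>/\<bar>b\<bar>" unfolding e by (simp add: abs_divide)
    also have "\<dots> \<le> K*d/\<bar>b\<bar>" using H True hb by (simp add: divide_right_mono)
    also have "\<dots> \<le> (K/\<bar>b\<bar>) * sqrt d" using sd hK hb by (simp add: divide_right_mono mult_left_mono)
    also have "\<dots> \<le> C * sqrt d" unfolding C_def using H by (simp add: distrib_right)
    finally have r1: "\<bar>x - ?y\<bar> \<le> C * sqrt d" .
    have "sqrt d \<le> sqrt ((h/C)^2)" using d2 by (rule real_sqrt_le_mono)
    also have "\<dots> = h/C" using C0 hh by simp
    finally have "sqrt d \<le> h/C" .
    then have "C * sqrt d \<le> h" using C0 by (simp add: field_simps)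
    moreover have "a*?y^2+b*?y+c = 0" using True hb by simp
    ultimately show "\<exists>y. a*y^2+b*y+c = 0 \<and> \<bar>x-y\<bar> \<le> C*sqrt d \<and> \<bar>x-y\<bar> \<le> h" using r1 order_trans by blast
  qed
next
  case False
  then have ap: "a > 0" using ha by auto
  define D where "D = b^2 - 4*a*c"
  have key: "4*a*(a*x^2+b*x+c) = (2*a*x+b)^2 - D" for x unfolding D_def by (simp add: power2_eq_square algebra_simps)
  show ?thesis
  proof (cases "D < 0")
    case True
    define d0 where "d0 = -D/(4*a*(K+1))"
    have d00: "d0 > 0" unfolding d0_def using True ap hK by (simp add: divide_neg_pos)
    show ?thesis
    proof (rule exI[of _ 1], rule conjI[OF zero_less_one], rule exI[of _ d0], rule conjI[OF d00], intro allI impI)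
      fix d x assume H: "0 \<le> d \<and> d \<le> d0 \<and> \<bar>a*x^2+b*x+c\<bar> \<le> K*d"
      have "4*a*(a*x^2+b*x+c) \<ge> -D" using key[of x] by simp
      moreover have "4*a*(K*d) \<le> 4*a*(K*d0)" using H ap hK by (simp add: mult_left_mono)
      moreover have "4*a*(K*d0) < -D"
      proof -
        have e: "4*a*(K*d0) = -D * (K/(K+1))" proof -
          have nz: "4*a*(K+1) \<noteq> 0" "K + 1 \<noteq> 0" using ap hK by auto
          show ?thesis unfolding d0_def using nz by (simp add: field_simps)
        qed
        have "K/(K+1) < 1" using hK by simp
        then have "-D * (K/(K+1)) < -D * 1" using True by (intro mult_strict_left_mono) auto
        then show ?thesis using e by simp
      qed
      moreover have "4*a*(a*x^2+b*x+c) \<le> 4*a*(K*d)" using H ap by (simp add: mult_left_mono abs_le_iff)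
      ultimately show "\<exists>y. a*y^2+b*y+c = 0 \<and> \<bar>x-y\<bar> \<le> 1*sqrt d \<and> \<bar>x-y\<bar> \<le> h" by linarith
    qed
  next
    case False
    define y1 where "y1 = (-b + sqrt D)/(2*a)"
    define y2 where "y2 = (-b - sqrt D)/(2*a)"
    have sD: "sqrt D ^2 = D" using False by simp
    have fac: "a*x^2+b*x+c = a*(x-y1)*(x-y2)" for x
    proof -
      have "4*a*(a*x^2+b*x+c) = 4*a*(a*(x-y1)*(x-y2))"
        unfolding key y1_def y2_def using ap sD by (simp add: field_simps power2_eq_square)
      then show ?thesis using ap by simp
    qed
    define C where "C = sqrt (K/a) + 1"
    have C0: "C > 0" unfolding C_def using ap hK by (simp add: add_nonneg_pos)
    define d0 where "d0 = (h/C)^2"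
    have d00: "d0 > 0" unfolding d0_def using C0 hh by simp
    show ?thesis
    proof (rule exI[of _ C], rule conjI[OF C0], rule exI[of _ d0], rule conjI[OF d00], intro allI impI)
      fix d x assume H: "0 \<le> d \<and> d \<le> d0 \<and> \<bar>a*x^2+b*x+c\<bar> \<le> K*d"
      obtain y where y: "y = y1 \<or> y = y2" and ym: "\<bar>x-y\<bar> \<le> \<bar>x-y1\<bar>" "\<bar>x-y\<bar> \<le> \<bar>x-y2\<bar>"
        by (metis linear)
      have "\<bar>x-y\<bar>*\<bar>x-y\<bar> \<le> \<bar>x-y1\<bar>*\<bar>x-y2\<bar>" by (rule mult_mono) (use ym in auto)
      then have "a*\<bar>x-y\<bar>^2 \<le> a*(\<bar>x-y1\<bar>*\<bar>x-y2\<bar>)" using ap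
        by (simp add: power2_eq_square mult_left_mono)
      also have "\<dots> = \<bar>a*x^2+b*x+c\<bar>" unfolding fac using ap by (simp add: abs_mult)
      also have "\<dots> \<le> K*d" using H by simp
      finally have "\<bar>x-y\<bar>^2 \<le> (K/a)*d" using ap by (simp add: field_simps)
      then have "\<bar>x-y\<bar> \<le> sqrt ((K/a)*d)" using real_le_rsqrt by blast
      also have "\<dots> = sqrt (K/a) * sqrt d" by (rule real_sqrt_mult)
      also have "\<dots> \<le> C * sqrt d" unfolding C_def using H by (simp add: distrib_right)
      finally have r1: "\<bar>x - y\<bar> \<le> C * sqrt d" .
      have "sqrt d \<le> sqrt d0" using H by simp
      also have "sqrt d0 = h/C" unfolding d0_def using C0 hh by simp
      finally have "C * sqrt d \<le> h" using C0 by (simp add: field_simps)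
      moreover have "a*y^2+b*y+c = 0" using y fac by auto
      ultimately show "\<exists>y. a*y^2+b*y+c = 0 \<and> \<bar>x-y\<bar> \<le> C*sqrt d \<and> \<bar>x-y\<bar> \<le> h" using r1 order_trans by blast
    qed
  qed
qed

lemma beta_mono_aux:
  fixes beta :: "nat \<Rightarrow> real"
  assumes hbmono: "\<forall>i<n. beta i \<le> beta (Suc i)"
  shows "j \<le> k \<Longrightarrow> k \<le> n \<Longrightarrow> beta j \<le> beta k"
proof (induction k)
  case 0 then show ?case by simp
next
  case (Suc k)
  show ?case
  proof (cases "j = Suc k")
    case True then show ?thesis by simp
  next
    case False
    then have "j \<le> k" using Suc.prems by simp
    then have "beta j \<le> beta k" using Suc by simp
    also have "beta k \<le> beta (Suc k)" using hbmono Suc.prems by simp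
    finally show ?thesis .
  qed
qed

lemma sum_split_ends:
  fixes f :: "nat \<Rightarrow> real"
  assumes "n \<ge> 1"
  shows "(\<Sum>i=0..n. f i) = f 0 + (\<Sum>i=1..n-1. f i) + f n"
proof -
  obtain m where m: "n = Suc m" using assms by (cases n) auto
  have "(\<Sum>i=0..n. f i) = (\<Sum>i=0..m. f i) + f n" unfolding m by (rule sum.atLeast0_atMost_Suc)
  also have "(\<Sum>i=0..m. f i) = f 0 + (\<Sum>i=Suc 0..m. f i)" by (rule sum.atLeast_Suc_atMost) simp
  finally show ?thesis using m by simp
qed

lemma endemic_unfold:
  assumes "endemic_eq n d w r mu p beta S I"
  shows "(\<forall>i\<in>{1..n-1}. - (p i * w) * S i + ((1 - p (i-1)) * d) * S (i-1) - ((1 - p i) * d) * S i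
                        - beta i * I * S i - mu * S i = 0)"
    and "mu - (p n * w) * S n + ((1 - p (n-1)) * d) * S (n-1) - beta n * I * S n - mu * S n = 0"
    and "I * (\<Sum>i=0..n. beta i * S i) - r * I - mu * I = 0"
    and "(\<Sum>i=0..n. S i) + I = 1"
    and "I \<noteq> 0"
  using assms unfolding endemic_eq_def Let_def by auto

lemma fac_le:
  fixes x d :: real
  assumes "0 \<le> x" "x \<le> 1" "0 \<le> d"
  shows "\<bar>(1 - x) * d\<bar> \<le> d"
proof -
  have "(1 - x) * d \<le> 1 * d" using assms by (intro mult_right_mono) auto
  then show ?thesis using assms by (simp add: abs_mult)
qed

lemma key_bound:
  fixes n :: nat and w r mu :: real and p beta :: "nat \<Rightarrow> real"
  assumes hn: "n \<ge> 1"
    and hw: "w \<ge> 0" and hr: "r > 0" and hmu: "mu > 0"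
    and hp0: "p 0 = 0" and hp: "\<forall>i\<in>{1..n}. 0 \<le> p i \<and> p i \<le> 1"
    and hb0: "0 \<le> beta 0" and hbmono: "\<forall>i<n. beta i \<le> beta (Suc i)"
    and hbn: "beta 0 < beta n"
  shows "\<exists>K\<ge>0. \<exists>d1>0. \<forall>d S I. 0 \<le> d \<and> d \<le> d1 \<and> endemic_eq n d w r mu p beta S I \<and> 0 \<le> I \<and> I \<le> 1 \<longrightarrow>
     \<bar>beta 0 * beta n * I^2 + (beta 0 * (mu + p n * w) + beta n * (mu + r - beta 0)) * I
       + ((p n * w + mu) * (mu + r) - beta 0 * (p n * w) - beta n * mu)\<bar> \<le> K * d"
proof -
  define b0 where "b0 = beta 0"
  define bn where "bn = beta n"
  define wn where "wn = p n * w"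
  define N where "N = real n"
  have N1: "N \<ge> 1" unfolding N_def using hn by simp
  have pr: "0 \<le> p i \<and> p i \<le> 1" if "i \<le> n" for i
    using hp hp0 that by (cases "i = 0") auto
  have bet: "0 \<le> beta i \<and> beta i \<le> bn" if "i \<le> n" for i
    using beta_mono_aux[OF hbmono, of 0 i] beta_mono_aux[OF hbmono, of i n] that hb0 unfolding bn_def by auto
  have wn0: "wn \<ge> 0" unfolding wn_def using pr[of n] hw by simp
  have b0n: "0 \<le> b0" "b0 < bn" using hb0 hbn unfolding b0_def bn_def by auto
  define K where "K = 12 * N * bn * (wn + bn + mu) / mu + 6 * bn"
  define d1 where "d1 = mu / (2 * N)"
  have K0: "K \<ge> 0" unfolding K_def using N1 b0n wn0 hmu by simp
  have d10: "d1 > 0" unfolding d1_def using N1 hmu by simp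
  show ?thesis
  proof (rule exI[of _ K], rule conjI[OF K0], rule exI[of _ d1], rule conjI[OF d10], intro allI impI)
    fix d S I
    assume H: "0 \<le> d \<and> d \<le> d1 \<and> endemic_eq n d w r mu p beta S I \<and> 0 \<le> I \<and> I \<le> 1"
    then have d0: "0 \<le> d" and dd1: "d \<le> d1" and E: "endemic_eq n d w r mu p beta S I"
      and I0: "0 \<le> I" and I1: "I \<le> 1" by auto
    have Nd: "N * d \<le> mu / 2" using dd1 N1 unfolding d1_def by (simp add: field_simps)
    have "d \<le> N * d" using N1 d0 by (simp add: mult_le_cancel_right1)
    then have dmu: "d \<le> mu" using Nd hmu by linarith
    note U = endemic_unfold[OF E]
    have step: "mu * \<bar>S i\<bar> \<le> d * \<bar>S (i-1)\<bar>" if i: "i \<in> {1..n-1}" for i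
    proof -
      define Di where "Di = p i * w + (1 - p i) * d + beta i * I + mu"
      have pi: "0 \<le> p i" "p i \<le> 1" using pr[of i] i by auto
      have pi1: "0 \<le> p (i-1)" "p (i-1) \<le> 1" using pr[of "i-1"] i by auto
      have bi: "0 \<le> beta i" using bet[of i] i by auto
      have Dge: "Di \<ge> mu" unfolding Di_def using pi bi hw d0 I0 by simp
      have eq: "S i * Di = ((1 - p (i-1)) * d) * S (i-1)" using U(1) i unfolding Di_def by (auto simp: algebra_simps)
      have "mu * \<bar>S i\<bar> \<le> Di * \<bar>S i\<bar>" using Dge by (simp add: mult_right_mono)
      also have "\<dots> = \<bar>(1 - p (i-1)) * d\<bar> * \<bar>S (i-1)\<bar>" using eq Dge hmu by (metis abs_mult abs_of_pos less_le_trans mult.commute)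
      also have "\<dots> \<le> d * \<bar>S (i-1)\<bar>" using fac_le[OF pi1 d0] by (intro mult_right_mono) auto
      finally show ?thesis .
    qed
    have chain: "i \<ge> 1 \<longrightarrow> i \<le> n-1 \<longrightarrow> mu * \<bar>S i\<bar> \<le> d * \<bar>S 0\<bar>" for i
    proof (induction i)
      case 0 then show ?case by simp
    next
      case (Suc i)
      show ?case
      proof (intro impI)
        assume a: "1 \<le> Suc i" "Suc i \<le> n - 1"
        show "mu * \<bar>S (Suc i)\<bar> \<le> d * \<bar>S 0\<bar>"
        proof (cases "i = 0")
          case True then show ?thesis using step[of 1] a by simp
        next
          case False
          then have ih: "mu * \<bar>S i\<bar> \<le> d * \<bar>S 0\<bar>" using Suc.IH a by simp
          have "mu * \<bar>S (Suc i)\<bar> \<le> d * \<bar>S i\<bar>" using step[of "Suc i"] a by simp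
          also have "\<dots> \<le> mu * \<bar>S i\<bar>" using dmu by (simp add: mult_right_mono)
          finally show ?thesis using ih by simp
        qed
      qed
    qed
    have sn1: "\<bar>S (n-1)\<bar> \<le> \<bar>S 0\<bar>"
    proof (cases "n = 1")
      case True then show ?thesis by simp
    next
      case False
      then have "mu * \<bar>S (n-1)\<bar> \<le> d * \<bar>S 0\<bar>" using chain[of "n-1"] hn by simp
      also have "\<dots> \<le> mu * \<bar>S 0\<bar>" using dmu by (simp add: mult_right_mono)
      finally show ?thesis using hmu by simp
    qed
    define X where "X = \<bar>S 0\<bar>"
    define T where "T = (\<Sum>i=1..n-1. S i)"
    define Tb where "Tb = (\<Sum>i=1..n-1. beta i * S i)"
    have cardm: "real (card {1..n-1}) = N - 1" unfolding N_def using hn by (simp add: of_nat_diff)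
    have Tbound: "mu * \<bar>T\<bar> \<le> (N - 1) * d * X"
    proof -
      have "mu * \<bar>T\<bar> \<le> mu * (\<Sum>i=1..n-1. \<bar>S i\<bar>)" unfolding T_def using hmu
        by (intro mult_left_mono sum_abs) auto
      also have "\<dots> = (\<Sum>i=1..n-1. mu * \<bar>S i\<bar>)" by (simp add: sum_distrib_left)
      also have "\<dots> \<le> real (card {1..n-1}) * (d * X)"
        by (rule sum_bounded_above) (use chain X_def in auto)
      finally show ?thesis using cardm by simp
    qed
    have Tbbound: "mu * \<bar>Tb\<bar> \<le> (N - 1) * (bn * d * X)"
    proof -
      have "mu * \<bar>Tb\<bar> \<le> mu * (\<Sum>i=1..n-1. \<bar>beta i * S i\<bar>)" unfolding Tb_def using hmu
        by (intro mult_left_mono sum_abs) auto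
      also have "\<dots> = (\<Sum>i=1..n-1. bn * (mu * \<bar>S i\<bar>) - (bn - beta i) * (mu * \<bar>S i\<bar>))"
        unfolding sum_distrib_left
      proof (rule sum.cong[OF refl])
        fix i assume i: "i \<in> {1..n-1}"
        have "0 \<le> beta i" using bet[of i] i by auto
        then show "mu * \<bar>beta i * S i\<bar> = bn * (mu * \<bar>S i\<bar>) - (bn - beta i) * (mu * \<bar>S i\<bar>)"
          by (simp add: abs_mult algebra_simps)
      qed
      also have "\<dots> \<le> real (card {1..n-1}) * (bn * d * X)"
      proof (rule sum_bounded_above)
        fix i assume i: "i \<in> {1..n-1}"
        have bi: "0 \<le> beta i" "beta i \<le> bn" using bet[of i] i by auto
        have "bn * (mu * \<bar>S i\<bar>) \<le> bn * (d * X)" using chain[of i] i bi X_def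
          by (intro mult_left_mono) auto
        moreover have "(bn - beta i) * (mu * \<bar>S i\<bar>) \<ge> 0" using bi hmu by simp
        ultimately show "bn * (mu * \<bar>S i\<bar>) - (bn - beta i) * (mu * \<bar>S i\<bar>) \<le> bn * d * X" by simp
      qed
      finally show ?thesis using cardm by simp
    qed
    define Dn where "Dn = wn + bn * I + mu"
    define e where "e = ((1 - p (n-1)) * d) * S (n-1)"
    have pn1: "0 \<le> p (n-1)" "p (n-1) \<le> 1" using pr[of "n-1"] by auto
    have ebound: "\<bar>e\<bar> \<le> d * X"
    proof -
      have "\<bar>e\<bar> = \<bar>(1 - p (n-1)) * d\<bar> * \<bar>S (n-1)\<bar>" unfolding e_def by (simp add: abs_mult)
      also have "\<dots> \<le> d * X" using fac_le[OF pn1 d0] d0 sn1 X_def by (intro mult_mono) auto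
      finally show ?thesis .
    qed
    have Dnge: "Dn \<ge> mu" unfolding Dn_def using wn0 b0n I0 by simp
    have Dnle: "Dn \<le> wn + bn + mu" unfolding Dn_def using b0n I1 by (simp add: mult_left_le)
    have Sneq: "S n * Dn = mu + e" using U(2) unfolding Dn_def e_def wn_def bn_def by (simp add: algebra_simps)
    have norm: "S 0 + T + S n + I = 1" using U(4) sum_split_ends[OF hn, of S] unfolding T_def by simp
    have Ieq: "b0 * S 0 + Tb + bn * S n = r + mu"
    proof -
      have "I * ((\<Sum>i=0..n. beta i * S i) - (r + mu)) = 0" using U(3) by (simp add: algebra_simps)
      then have "(\<Sum>i=0..n. beta i * S i) = r + mu" using U(5) by simp
      then show ?thesis using sum_split_ends[OF hn, of "\<lambda>i. beta i * S i"] unfolding Tb_def b0_def bn_def by simp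
    qed
    have Snb: "mu * \<bar>S n\<bar> \<le> mu + d * X"
    proof -
      have "mu * \<bar>S n\<bar> \<le> Dn * \<bar>S n\<bar>" using Dnge by (simp add: mult_right_mono)
      also have "\<dots> = \<bar>mu + e\<bar>" using Sneq Dnge hmu by (metis abs_mult abs_of_pos less_le_trans mult.commute)
      also have "\<dots> \<le> mu + d * X" using ebound hmu by simp
      finally show ?thesis .
    qed
    have X6: "X \<le> 6"
    proof -
      have "X \<le> 1 + \<bar>T\<bar> + \<bar>S n\<bar> + 1" using norm I0 I1 unfolding X_def by linarith
      then have "mu * X \<le> mu * (1 + \<bar>T\<bar> + \<bar>S n\<bar> + 1)" using hmu by (simp add: mult_left_mono)
      also have "\<dots> = 2 * mu + mu * \<bar>T\<bar> + mu * \<bar>S n\<bar>" by (simp add: algebra_simps)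
      also have "\<dots> \<le> 3 * mu + N * d * X" using Tbound Snb by (simp add: algebra_simps)
      also have "N * d * X \<le> (mu / 2) * X" using Nd X_def by (intro mult_right_mono) auto
      finally have "mu * X \<le> 3 * mu + (mu/2) * X" by simp
      then have "mu * (X - 6) \<le> 0" by (simp add: algebra_simps)
      then show ?thesis using hmu by (simp add: mult_le_0_iff)
    qed
    have X0: "X \<ge> 0" unfolding X_def by simp
    have ident: "b0 * bn * I^2 + (b0 * (mu + wn) + bn * (mu + r - b0)) * I
       + ((wn + mu) * (mu + r) - b0 * wn - bn * mu) = -((b0 * T - Tb) * Dn + (b0 - bn) * e)"
      using norm Ieq Sneq unfolding Dn_def by algebra
    have Tle: "mu * \<bar>T\<bar> \<le> 6 * N * d"
    proof -
      have "(N - 1) * d * X \<le> (N - 1) * d * 6" using X6 N1 d0 by (intro mult_left_mono) auto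
      moreover have "(N - 1) * d * 6 \<le> 6 * N * d" using d0 by (simp add: algebra_simps)
      ultimately show ?thesis using Tbound by linarith
    qed
    have Tble: "mu * \<bar>Tb\<bar> \<le> 6 * N * bn * d"
    proof -
      have "(N - 1) * (bn * d * X) \<le> (N - 1) * (bn * d * 6)" using X6 N1 d0 b0n by (intro mult_left_mono) auto
      moreover have "(N - 1) * (bn * d * 6) \<le> 6 * N * bn * d" using d0 b0n by (simp add: algebra_simps)
      ultimately show ?thesis using Tbbound by linarith
    qed
    have A: "b0 * \<bar>T\<bar> + \<bar>Tb\<bar> \<le> 12 * N * bn * d / mu"
    proof -
      have "b0 * (mu * \<bar>T\<bar>) \<le> b0 * (6 * N * d)" using Tle b0n by (intro mult_left_mono) auto
      also have "\<dots> \<le> bn * (6 * N * d)" using b0n N1 d0 by (intro mult_right_mono) auto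
      finally have "mu * (b0 * \<bar>T\<bar>) \<le> bn * (6 * N * d)" by (simp add: algebra_simps)
      then have "mu * (b0 * \<bar>T\<bar> + \<bar>Tb\<bar>) \<le> 12 * N * bn * d" using Tble by (simp add: algebra_simps)
      then show ?thesis using hmu by (simp add: field_simps)
    qed
    have "\<bar>b0 * bn * I^2 + (b0 * (mu + wn) + bn * (mu + r - b0)) * I
       + ((wn + mu) * (mu + r) - b0 * wn - bn * mu)\<bar> \<le> (b0 * \<bar>T\<bar> + \<bar>Tb\<bar>) * Dn + (bn - b0) * \<bar>e\<bar>"
    proof -
      have Dp: "Dn > 0" using Dnge hmu by linarith
      have t0: "\<bar>b0*T - Tb\<bar> \<le> \<bar>b0*T\<bar> + \<bar>Tb\<bar>" by (rule abs_triangle_ineq4)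
      have t1: "\<bar>b0*T\<bar> = b0*\<bar>T\<bar>" using b0n by (simp add: abs_mult)
      have "\<bar>(b0 * T - Tb) * Dn\<bar> = \<bar>b0 * T - Tb\<bar> * Dn" using Dp by (simp add: abs_mult)
      also have "\<dots> \<le> (b0 * \<bar>T\<bar> + \<bar>Tb\<bar>) * Dn" using t0 t1 Dp by (intro mult_right_mono) auto
      finally have m1: "\<bar>(b0 * T - Tb) * Dn\<bar> \<le> (b0 * \<bar>T\<bar> + \<bar>Tb\<bar>) * Dn" .
      have m2: "\<bar>(b0 - bn) * e\<bar> = (bn - b0) * \<bar>e\<bar>" using b0n by (simp add: abs_mult)
      have m3: "\<bar>-(x + y)\<bar> \<le> \<bar>x\<bar> + \<bar>y\<bar>" for x y :: real by (simp add: abs_triangle_ineq)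
      show ?thesis unfolding ident using m3[of "(b0 * T - Tb) * Dn" "(b0 - bn) * e"] m1 m2 by linarith
    qed
    also have "\<dots> \<le> (12 * N * bn * d / mu) * (wn + bn + mu) + bn * (6 * d)"
    proof (rule add_mono)
      show "(b0 * \<bar>T\<bar> + \<bar>Tb\<bar>) * Dn \<le> (12 * N * bn * d / mu) * (wn + bn + mu)"
        using A Dnle Dnge hmu b0n N1 d0 by (intro mult_mono) auto
      have "d * X \<le> d * 6" using X6 d0 by (intro mult_left_mono) auto
      then have e6: "\<bar>e\<bar> \<le> 6 * d" using ebound by linarith
      have "(bn - b0) * \<bar>e\<bar> \<le> bn * \<bar>e\<bar>" using b0n by (intro mult_right_mono) auto
      also have "\<dots> \<le> bn * (6 * d)" using e6 b0n by (intro mult_left_mono) auto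
      finally show "(bn - b0) * \<bar>e\<bar> \<le> bn * (6 * d)" .
    qed
    also have "\<dots> = K * d" unfolding K_def by (simp add: field_simps)
    finally show "\<bar>beta 0 * beta n * I^2 + (beta 0 * (mu + p n * w) + beta n * (mu + r - beta 0)) * I
       + ((p n * w + mu) * (mu + r) - beta 0 * (p n * w) - beta n * mu)\<bar> \<le> K * d"
      unfolding b0_def bn_def wn_def .
  qed
qed

lemma wiF_mult:
  fixes b0 bn wn r mu y :: real
  assumes A: "b0 * y + mu \<noteq> 0" and B: "bn * y + mu + wn \<noteq> 0"
  shows "wi_F r mu b0 bn wn y * ((b0 * y + mu) * (bn * y + mu + wn)) =
     b0 * bn * y^2 + (b0 * (mu + wn) + bn * (mu + r - b0)) * y + ((wn + mu) * (mu + r) - b0 * wn - bn * mu)"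
proof -
  define P where "P = b0 * y + mu"
  define Q where "Q = bn * y + mu + wn"
  have 1: "r / P * (P * Q) = r * Q" using A unfolding P_def by simp
  have 2: "bn / Q * (P * Q) = bn * P" using B unfolding Q_def by simp
  have 3: "wn * b0 / (P * Q) * (P * Q) = wn * b0" using A B unfolding P_def Q_def by simp
  have "wi_F r mu b0 bn wn y * (P * Q) = P * Q + r / P * (P * Q) - bn / Q * (P * Q) - wn * b0 / (P * Q) * (P * Q)"
    unfolding wi_F_def P_def[symmetric] Q_def[symmetric] by (simp only: ring_distribs mult_1)
  also have "\<dots> = P * Q + r * Q - bn * P - wn * b0" unfolding 1 2 3 ..
  finally show ?thesis unfolding P_def Q_def by (simp add: power2_eq_square algebra_simps)
qed
theorem lemma1:
  fixes n :: nat and w r mu :: real and p beta :: "nat \<Rightarrow> real"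
  assumes hn: "n \<ge> 1"
    and hw: "w \<ge> 0" and hr: "r > 0" and hmu: "mu > 0"
    and hp0: "p 0 = 0" and hp: "\<forall>i\<in>{1..n}. 0 \<le> p i \<and> p i \<le> 1"
    and hb0: "0 \<le> beta 0" and hbmono: "\<forall>i<n. beta i \<le> beta (Suc i)"
    and hbn: "beta 0 < beta n"
  shows
    "(\<exists>C>0. \<exists>d0>0. \<forall>d. 0 \<le> d \<and> d \<le> d0 \<longrightarrow>
        (\<forall>S I. endemic_eq n d w r mu p beta S I \<and> 0 \<le> I \<and> I \<le> 1 \<longrightarrow>
           (\<exists>y. wi_root r mu (beta 0) (beta n) (p n * w) y \<and> \<bar>I - y\<bar> \<le> C * sqrt d)))
     \<and> ((\<not> (\<exists>y\<in>{0..1}. wi_root r mu (beta 0) (beta n) (p n * w) y)) \<longrightarrow>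
        (\<exists>d0>0. \<forall>d. 0 \<le> d \<and> d \<le> d0 \<longrightarrow>
           \<not> (\<exists>S I. endemic_eq n d w r mu p beta S I \<and> 0 \<le> I \<and> I \<le> 1)))
     \<and> ((p n * w + mu) * (mu + r) > beta 0 * (p n * w) + beta n * mu \<longrightarrow>
        \<not> (\<exists>y\<in>{0..1}. wi_root r mu (beta 0) (beta n) (p n * w) y))
     \<and> ((p n * w + mu) * (mu + r) < beta 0 * (p n * w) + beta n * mu \<longrightarrow>
        (\<exists>!y. y \<in> {0..1} \<and> wi_root r mu (beta 0) (beta n) (p n * w) y))
     \<and> ((p n * w + mu) * (mu + r) = beta 0 * (p n * w) + beta n * mu \<longrightarrow>
        wi_root r mu (beta 0) (beta n) (p n * w) 0)"
  proof -
  define b0 where "b0 = beta 0"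
  define bn where "bn = beta n"
  define wn where "wn = p n * w"
  define a where "a = b0 * bn"
  define b where "b = b0 * (mu + wn) + bn * (mu + r - b0)"
  define c where "c = (wn + mu) * (mu + r) - b0 * wn - bn * mu"
  define Pol where "Pol x = a * x^2 + b * x + c" for x
  have PolE: "Pol = (\<lambda>x. a * x^2 + b * x + c)" by (rule ext) (simp add: Pol_def)
  have pn: "0 \<le> p n" "p n \<le> 1" using hp hn by auto
  have wn0: "wn \<ge> 0" unfolding wn_def using pn hw by simp
  have b0n: "0 \<le> b0" "b0 < bn" using hb0 hbn unfolding b0_def bn_def by auto
  have root_iff: "wi_root r mu (beta 0) (beta n) (p n * w) y \<longleftrightarrow> Pol y = 0"
    if A: "b0 * y + mu > 0" and B: "bn * y + mu + wn > 0" for y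
  proof -
    have m: "wi_F r mu b0 bn wn y * ((b0 * y + mu) * (bn * y + mu + wn)) = Pol y"
      unfolding Pol_def a_def b_def c_def using A B by (intro wiF_mult) auto
    have M: "(b0 * y + mu) * (bn * y + mu + wn) \<noteq> 0" using A B by simp
    have e: "wi_F r mu b0 bn wn y = 0 \<longleftrightarrow> Pol y = 0" using M m by (metis mult_eq_0_iff)
    show ?thesis unfolding wi_root_def b0_def[symmetric] bn_def[symmetric] wn_def[symmetric] e
      using A B by auto
  qed
  have pos01: "b0 * y + mu > 0 \<and> bn * y + mu + wn > 0" if "0 \<le> y" for y
  proof -
    have "b0 * y \<ge> 0" "bn * y \<ge> 0" using that b0n by auto
    then show ?thesis using wn0 hmu by linarith
  qed
  obtain K d1 where K0: "K \<ge> 0" and d10: "d1 > 0" and KB: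
    "\<And>d S I. 0 \<le> d \<Longrightarrow> d \<le> d1 \<Longrightarrow> endemic_eq n d w r mu p beta S I \<Longrightarrow> 0 \<le> I \<Longrightarrow> I \<le> 1 \<Longrightarrow>
       \<bar>Pol I\<bar> \<le> K * d"
    using key_bound[OF hn hw hr hmu hp0 hp hb0 hbmono hbn]
    unfolding Pol_def a_def b_def c_def b0_def bn_def wn_def by blast
  have P1: "\<exists>C>0. \<exists>d0>0. \<forall>d. 0 \<le> d \<and> d \<le> d0 \<longrightarrow>
        (\<forall>S I. endemic_eq n d w r mu p beta S I \<and> 0 \<le> I \<and> I \<le> 1 \<longrightarrow>
           (\<exists>y. wi_root r mu (beta 0) (beta n) (p n * w) y \<and> \<bar>I - y\<bar> \<le> C * sqrt d))"
  proof -
    define h where "h = mu / (2 * (bn + 1))"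
    have h0: "h > 0" unfolding h_def using hmu b0n by simp
    have a0: "a \<ge> 0" unfolding a_def using b0n by simp
    have ab: "a > 0 \<or> b \<noteq> 0"
    proof (cases "b0 = 0")
      case True
      then have "b = bn * (mu + r)" unfolding b_def by simp
      moreover have "bn * (mu + r) > 0" using b0n hmu hr True by simp
      ultimately show ?thesis by (metis less_irrefl)
    next
      case False
      then show ?thesis unfolding a_def using b0n by simp
    qed
    obtain C d0 where C0: "C > 0" and d00: "d0 > 0" and Q:
      "\<And>d x. 0 \<le> d \<Longrightarrow> d \<le> d0 \<Longrightarrow> \<bar>a*x^2+b*x+c\<bar> \<le> K*d \<Longrightarrow>
           (\<exists>y. a*y^2+b*y+c = 0 \<and> \<bar>x-y\<bar> \<le> C*sqrt d \<and> \<bar>x-y\<bar> \<le> h)"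
      using quad_near_root[OF a0 ab K0 h0, of c] by blast
    have hb: "bn * h \<le> mu / 2" "b0 * h \<le> mu / 2"
    proof -
      have "(bn + 1) * h = mu / 2" unfolding h_def using b0n by (simp add: field_simps)
      moreover have "bn * h \<le> (bn + 1) * h" "b0 * h \<le> bn * h" using h0 b0n by (auto intro: mult_right_mono)
      ultimately show "bn * h \<le> mu / 2" "b0 * h \<le> mu / 2" by linarith+
    qed
    show ?thesis
    proof (rule exI[of _ C], rule conjI[OF C0], rule exI[of _ "min d0 d1"], rule conjI, simp add: d00 d10, intro allI impI)
      fix d S I
      assume d: "0 \<le> d \<and> d \<le> min d0 d1" and H: "endemic_eq n d w r mu p beta S I \<and> 0 \<le> I \<and> I \<le> 1"
      have "\<bar>Pol I\<bar> \<le> K * d" using KB[of d S I] d H by auto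
      then obtain y where y: "Pol y = 0" "\<bar>I-y\<bar> \<le> C*sqrt d" "\<bar>I-y\<bar> \<le> h"
        using Q[of d I] d unfolding Pol_def by auto
      have yh: "y \<ge> -h" using y(3) H by linarith
      have "b0 * y \<ge> b0 * (-h)" using yh b0n by (intro mult_left_mono) auto
      then have A: "b0 * y + mu > 0" using hb hmu by linarith
      have "bn * y \<ge> bn * (-h)" using yh b0n by (intro mult_left_mono) auto
      then have B: "bn * y + mu + wn > 0" using hb hmu wn0 by linarith
      show "\<exists>y. wi_root r mu (beta 0) (beta n) (p n * w) y \<and> \<bar>I - y\<bar> \<le> C * sqrt d"
        using root_iff[OF A B] y by blast
    qed
  qed
  have P2: "(\<not> (\<exists>y\<in>{0..1}. wi_root r mu (beta 0) (beta n) (p n * w) y)) \<longrightarrow>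
        (\<exists>d0>0. \<forall>d. 0 \<le> d \<and> d \<le> d0 \<longrightarrow>
           \<not> (\<exists>S I. endemic_eq n d w r mu p beta S I \<and> 0 \<le> I \<and> I \<le> 1))"
  proof
    assume nr: "\<not> (\<exists>y\<in>{0..1}. wi_root r mu (beta 0) (beta n) (p n * w) y)"
    have nz: "Pol y \<noteq> 0" if "y \<in> {0..1}" for y
      using nr that root_iff pos01 by auto
    have cont: "continuous_on {0..1} (\<lambda>x. \<bar>Pol x\<bar>)" unfolding Pol_def by (intro continuous_intros)
    obtain x0 where x0: "x0 \<in> {0..1}" "\<And>y. y \<in> {0..1} \<Longrightarrow> \<bar>Pol x0\<bar> \<le> \<bar>Pol y\<bar>"
      using continuous_attains_inf[OF compact_Icc _ cont] by auto
    define m where "m = \<bar>Pol x0\<bar>"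
    have m0: "m > 0" unfolding m_def using nz[OF x0(1)] by simp
    define d0 where "d0 = min d1 (m / (2 * (K + 1)))"
    have d00: "d0 > 0" unfolding d0_def using d10 m0 K0 by simp
    show "\<exists>d0>0. \<forall>d. 0 \<le> d \<and> d \<le> d0 \<longrightarrow> \<not> (\<exists>S I. endemic_eq n d w r mu p beta S I \<and> 0 \<le> I \<and> I \<le> 1)"
    proof (rule exI[of _ d0], rule conjI[OF d00], intro allI impI notI)
      fix d assume d: "0 \<le> d \<and> d \<le> d0" and "\<exists>S I. endemic_eq n d w r mu p beta S I \<and> 0 \<le> I \<and> I \<le> 1"
      then obtain S I where H: "endemic_eq n d w r mu p beta S I" "0 \<le> I" "I \<le> 1" by auto
      have "\<bar>Pol I\<bar> \<le> K * d" using KB[of d S I] d H unfolding d0_def by auto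
      moreover have "m \<le> \<bar>Pol I\<bar>" unfolding m_def using x0(2) H by auto
      moreover have "K * d \<le> K * (m / (2 * (K + 1)))" using d K0 unfolding d0_def by (intro mult_left_mono) auto
      moreover have "K * (m / (2 * (K + 1))) < m"
      proof -
        have "K * (m / (2 * (K + 1))) = m * (K / (2 * (K + 1)))" by simp
        moreover have "K / (2 * (K + 1)) < 1" using K0 by simp
        ultimately show ?thesis using m0 by (metis mult.right_neutral mult_strict_left_mono)
      qed
      ultimately show False by linarith
    qed
  qed
  have P3: "(p n * w + mu) * (mu + r) > beta 0 * (p n * w) + beta n * mu \<longrightarrow>
        \<not> (\<exists>y\<in>{0..1}. wi_root r mu (beta 0) (beta n) (p n * w) y)"
  proof (intro impI notI)
    assume "(p n * w + mu) * (mu + r) > beta 0 * (p n * w) + beta n * mu"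
    then have c0: "c > 0" unfolding c_def b0_def bn_def wn_def by simp
    assume "\<exists>y\<in>{0..1}. wi_root r mu (beta 0) (beta n) (p n * w) y"
    then obtain y where y: "0 \<le> y" "y \<le> 1" "Pol y = 0" using root_iff pos01 by auto
    have b0r: "b0 < mu + r"
    proof (rule ccontr)
      assume "\<not> b0 < mu + r"
      then have "b0 * wn \<ge> (mu + r) * wn" using wn0 by (intro mult_right_mono) auto
      then have "mu * (mu + r) > mu * bn" using c0 unfolding c_def by (simp add: algebra_simps)
      then have "mu + r > bn" using hmu by simp
      then show False using b0n \<open>\<not> b0 < mu + r\<close> by simp
    qed
    have "b > 0" unfolding b_def using b0r b0n hmu wn0 by (simp add: add_nonneg_pos)
    then have "b * y \<ge> 0" "a * y^2 \<ge> 0" using y b0n unfolding a_def by auto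
    then have "Pol y > 0" unfolding Pol_def using c0 by linarith
    then show False using y by simp
  qed
  have P4: "(p n * w + mu) * (mu + r) < beta 0 * (p n * w) + beta n * mu \<longrightarrow>
        (\<exists>!y. y \<in> {0..1} \<and> wi_root r mu (beta 0) (beta n) (p n * w) y)"
  proof
    assume "(p n * w + mu) * (mu + r) < beta 0 * (p n * w) + beta n * mu"
    then have c0: "c < 0" unfolding c_def b0_def bn_def wn_def by simp
    have P0: "Pol 0 \<le> 0" unfolding Pol_def using c0 by simp
    have "Pol 1 = b0 * mu + bn * r + (wn + mu) * (mu + r)" unfolding Pol_def a_def b_def c_def by (simp add: algebra_simps)
    then have P1': "Pol 1 \<ge> 0" using b0n hmu hr wn0 by simp
    have "\<exists>x\<ge>0. x \<le> 1 \<and> Pol x = 0"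
      by (rule IVT[of Pol 0 0 1, OF P0 P1']) (auto intro!: continuous_intros simp: PolE)
    then obtain y where y: "0 \<le> y" "y \<le> 1" "Pol y = 0" by auto
    show "\<exists>!y. y \<in> {0..1} \<and> wi_root r mu (beta 0) (beta n) (p n * w) y"
    proof (rule ex1I[of _ y])
      show "y \<in> {0..1} \<and> wi_root r mu (beta 0) (beta n) (p n * w) y" using y root_iff pos01 by auto
    next
      fix z assume "z \<in> {0..1} \<and> wi_root r mu (beta 0) (beta n) (p n * w) z"
      then have z: "0 \<le> z" "z \<le> 1" "Pol z = 0" using root_iff pos01 by auto
      show "z = y"
      proof (rule ccontr)
        assume ne: "z \<noteq> y"
        have "(z - y) * (a * (z + y) + b) = 0" using y(3) z(3) unfolding Pol_def by algebra
        then have s: "a * (z + y) + b = 0" using ne by simp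
        have "c = a * z * y" using s z(3) unfolding Pol_def by algebra
        moreover have "a * z * y \<ge> 0" using z y b0n unfolding a_def by simp
        ultimately show False using c0 by simp
      qed
    qed
  qed
  have P5: "(p n * w + mu) * (mu + r) = beta 0 * (p n * w) + beta n * mu \<longrightarrow>
        wi_root r mu (beta 0) (beta n) (p n * w) 0"
  proof
    assume "(p n * w + mu) * (mu + r) = beta 0 * (p n * w) + beta n * mu"
    then have "c = 0" unfolding c_def b0_def bn_def wn_def by simp
    then have "Pol 0 = 0" unfolding Pol_def by simp
    then show "wi_root r mu (beta 0) (beta n) (p n * w) 0" using root_iff pos01[of 0] by auto
  qed
  show ?thesis using P1 P2 P3 P4 P5 by blast
qed

end
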